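(* Fix an iteration index $k \ge 0$ and an agent index $i \in \{0,1,\dots,n\}$. Suppose the densities $p_j^{(k+1)}$ for $j<i$ and $p_j^{(k)}$ for all $j$ are given. Define $\bar{\gamma}_i^{(k)}$ and $\bar{c}_i^{(k)}$ by $$\bar{\gamma}_i^{(k)}(f) = \sum_{j=0}^{i-1} \int_{\mathcal{F}} \psi(f, g)\, p_j^{(k+1)}(g)\, dg + \sum_{j=i+1}^{n} \int_{\mathcal{F}} \psi(f, g)\, p_j^{(k)}(g)\, dg, \qquad f\in\mathcal{F},$$ $$\bar{c}_i^{(k)}(p) = \int_{\mathcal{F}} p(f)\, \bar{\gamma}_i^{(k)}(f)\, df \quad (p\in\mathcal{P}).$$ Let $$p_i^{(k+1)}(f) = \frac{p_i^{(k)}(f)\exp\big(-\bar{\gamma}_i^{(k)}(f)\big)}{\int_{\mathcal{F}} p_i^{(k)}(g)\exp\big(-\bar{\gamma}_i^{(k)}(g)\big)\, dg}.$$ If $p_i^{(k+1)} \neq p_i^{(k)}$, then there exists $\xi>0$ such that $$\bar{c}_i^{(k)}\big(p_i^{(k+1)}\big) \le \bar{c}_i^{(k)}\big(p_i^{(k)}\big) - \xi .$$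
   Context: Trajectory space: $\mathcal{F} \subseteq \mathbb{R}^{d\times T}$, where $d$ is the state dimension and $T$ is the number of time points. Distribution space: $\mathcal{P}$ is the set of probability density functions $p:\mathcal{F}\to[0,\infty)$ with $\int_{\mathcal{F}} p(f)\,df=1$. There are $n+1$ agents, indexed $0,1,\dots,n$ (index $0$ is the robot). For each iteration $k\ge 0$ and each agent $j$, $p_j^{(k)}\in\mathcal{P}$ is agent $j$'s preference density. The collision penalty function $\psi:\mathcal{F}\times\mathcal{F}\to[0,\infty)$ is symmetric, i.e. $\psi(f,g)=\psi(g,f)$. *)

theory Defs
  imports "HOL-Analysis.Analysis"
begin

text \<open>Trajectories are d x T real matrices, rendered as real^'t^'d; the
trajectory space F is a Borel subset, and integrals over F are Lebesgue
(Bochner) integrals w.r.t. lborel restricted to F.\<close>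

definition density_space :: "('a::euclidean_space) set \<Rightarrow> ('a \<Rightarrow> real) set" where
  "density_space F = {p. (\<forall>f\<in>F. 0 \<le> p f) \<and> set_integrable lborel F p
                         \<and> (LINT f:F|lborel. p f) = 1}"

text \<open>gamma_bar F psi p n i k f: p k j is the density of agent j at iteration k.\<close>
definition gamma_bar ::
  "('a::euclidean_space) set \<Rightarrow> ('a \<Rightarrow> 'a \<Rightarrow> real) \<Rightarrow> (nat \<Rightarrow> nat \<Rightarrow> 'a \<Rightarrow> real)
    \<Rightarrow> nat \<Rightarrow> nat \<Rightarrow> nat \<Rightarrow> 'a \<Rightarrow> real" where
  "gamma_bar F psi p n i k f =
     (\<Sum>j<i. LINT g:F|lborel. psi f g * p (Suc k) j g)
   + (\<Sum>j\<in>{i<..n}. LINT g:F|lborel. psi f g * p k j g)"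

definition c_bar ::
  "('a::euclidean_space) set \<Rightarrow> ('a \<Rightarrow> 'a \<Rightarrow> real) \<Rightarrow> (nat \<Rightarrow> nat \<Rightarrow> 'a \<Rightarrow> real)
    \<Rightarrow> nat \<Rightarrow> nat \<Rightarrow> nat \<Rightarrow> ('a \<Rightarrow> real) \<Rightarrow> real" where
  "c_bar F psi p n i k q = (LINT f:F|lborel. q f * gamma_bar F psi p n i k f)"

end

theory Submission
  imports Defs
begin

lemma exp_key_le: "((x::real) - m) * (exp (- x) - exp (- m)) \<le> 0"
proof (cases "x \<le> m")
  case True
  then have "exp (- m) \<le> exp (- x)" by simp
  then show ?thesis using True by (simp add: mult_nonpos_nonneg)
next
  case False
  then have "exp (- x) \<le> exp (- m)" by simp
  then show ?thesis using False by (simp add: mult_nonneg_nonpos)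
qed

lemma exp_key_eq: "((x::real) - m) * (exp (- x) - exp (- m)) = 0 \<Longrightarrow> x = m"
  by auto

theorem lemma1:
  fixes F :: "(real^'t^'d) set"
    and psi :: "real^'t^'d \<Rightarrow> real^'t^'d \<Rightarrow> real"
    and p :: "nat \<Rightarrow> nat \<Rightarrow> real^'t^'d \<Rightarrow> real"
    and n k i :: nat
  assumes F_meas: "F \<in> sets lborel"
    and psi_meas: "(\<lambda>(f, g). psi f g) \<in> borel_measurable (lborel \<Otimes>\<^sub>M lborel)"
    and psi_nonneg: "\<And>f g. f \<in> F \<Longrightarrow> g \<in> F \<Longrightarrow> 0 \<le> psi f g"
    and psi_sym: "\<And>f g. f \<in> F \<Longrightarrow> g \<in> F \<Longrightarrow> psi f g = psi g f"
    and i_le: "i \<le> n"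
    and p_k: "\<And>j. j \<le> n \<Longrightarrow> p k j \<in> density_space F"
    and p_Suc_k: "\<And>j. j < i \<Longrightarrow> p (Suc k) j \<in> density_space F"
    and int_before: "\<And>f j. f \<in> F \<Longrightarrow> j < i \<Longrightarrow>
                       set_integrable lborel F (\<lambda>g. psi f g * p (Suc k) j g)"
    and int_after: "\<And>f j. f \<in> F \<Longrightarrow> i < j \<Longrightarrow> j \<le> n \<Longrightarrow>
                       set_integrable lborel F (\<lambda>g. psi f g * p k j g)"
    and cost_finite: "set_integrable lborel F (\<lambda>f. p k i f * gamma_bar F psi p n i k f)"
    and update: "\<And>f. f \<in> F \<Longrightarrow> p (Suc k) i f =
        p k i f * exp (- gamma_bar F psi p n i k f) /
        (LINT g:F|lborel. p k i g * exp (- gamma_bar F psi p n i k g))"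
    and changed: "\<not> (AE f in lborel. f \<in> F \<longrightarrow> p (Suc k) i f = p k i f)"
  shows "\<exists>\<xi>>0. c_bar F psi p n i k (p (Suc k) i) \<le> c_bar F psi p n i k (p k i) - \<xi>"
proof -
  define P where "P = p k i"
  define Q where "Q = p (Suc k) i"
  define G where "G = gamma_bar F psi p n i k"
  define I where "I = (\<lambda>x. indicator F x :: real)"
  define a where "a = (\<lambda>x. I x * P x)"
  define b where "b = (\<lambda>x. I x * (P x * G x))"
  define e where "e = (\<lambda>x. a x * exp (- G x))"
  define d where "d = (\<lambda>x. b x * exp (- G x))"
  have Pd: "P \<in> density_space F" using p_k i_le unfolding P_def by auto
  have P_nn: "\<And>x. x \<in> F \<Longrightarrow> 0 \<le> P x" using Pd unfolding density_space_def by auto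
  have a_int: "integrable lborel a" using Pd
    unfolding density_space_def set_integrable_def a_def I_def by auto
  have a_one: "integral\<^sup>L lborel a = 1" using Pd
    unfolding density_space_def set_lebesgue_integral_def a_def I_def by auto
  have b_int: "integrable lborel b" using cost_finite
    unfolding set_integrable_def b_def I_def P_def G_def by auto
  define m where "m = integral\<^sup>L lborel b"
  have cP: "c_bar F psi p n i k (p k i) = m"
    unfolding m_def c_bar_def set_lebesgue_integral_def b_def I_def P_def G_def by simp
  have G_nn: "\<And>x. x \<in> F \<Longrightarrow> 0 \<le> G x"
  proof -
    fix x assume x: "x \<in> F"
    show "0 \<le> G x" unfolding G_def gamma_bar_def
    proof (intro add_nonneg_nonneg sum_nonneg)
      fix j assume j: "j \<in> {..<i}"
      then have "p (Suc k) j \<in> density_space F" using p_Suc_k by auto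
      then show "0 \<le> (LINT g:F|lborel. psi x g * p (Suc k) j g)"
        using x psi_nonneg unfolding density_space_def set_lebesgue_integral_def
        by (intro Bochner_Integration.integral_nonneg) (auto split: split_indicator)
    next
      fix j assume j: "j \<in> {i<..n}"
      then have "p k j \<in> density_space F" using p_k by auto
      then show "0 \<le> (LINT g:F|lborel. psi x g * p k j g)"
        using x psi_nonneg unfolding density_space_def set_lebesgue_integral_def
        by (intro Bochner_Integration.integral_nonneg) (auto split: split_indicator)
    qed
  qed
  have a_nn: "\<And>x. 0 \<le> a x" using P_nn unfolding a_def I_def by (auto split: split_indicator)
  have b_nn: "\<And>x. 0 \<le> b x" using P_nn G_nn unfolding b_def I_def by (auto split: split_indicator)
  have a_meas: "a \<in> borel_measurable lborel" using a_int by auto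
  have b_meas: "b \<in> borel_measurable lborel" using b_int by auto
  have e_alt: "e = (\<lambda>x. a x * exp (- (b x / a x)))"
    unfolding e_def a_def b_def by (auto simp: fun_eq_iff)
  have d_alt: "d = (\<lambda>x. b x * exp (- (b x / a x)))"
    unfolding d_def a_def b_def by (auto simp: fun_eq_iff I_def split: split_indicator)
  have e_meas: "e \<in> borel_measurable lborel" unfolding e_alt using a_meas b_meas by measurable
  have d_meas: "d \<in> borel_measurable lborel" unfolding d_alt using a_meas b_meas by measurable
  have e_nn: "\<And>x. 0 \<le> e x" unfolding e_def using a_nn by simp
  have d_nn: "\<And>x. 0 \<le> d x" unfolding d_def using b_nn by simp
  have e_le: "\<And>x. e x \<le> a x"
  proof -
    fix x show "e x \<le> a x"
    proof (cases "x \<in> F")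
      case True
      then have "exp (- G x) \<le> 1" using G_nn by simp
      then show ?thesis unfolding e_def using a_nn[of x] by (simp add: mult_left_le)
    qed (simp add: e_def a_def I_def)
  qed
  have d_le: "\<And>x. d x \<le> b x"
  proof -
    fix x show "d x \<le> b x"
    proof (cases "x \<in> F")
      case True
      then have "exp (- G x) \<le> 1" using G_nn by simp
      then show ?thesis unfolding d_def using b_nn[of x] by (simp add: mult_left_le)
    qed (simp add: d_def b_def I_def)
  qed
  have e_int: "integrable lborel e"
    by (rule Bochner_Integration.integrable_bound[OF a_int e_meas]) (use e_nn e_le a_nn in auto)
  have d_int: "integrable lborel d"
    by (rule Bochner_Integration.integrable_bound[OF b_int d_meas]) (use d_nn d_le b_nn in auto)
  define Z where "Z = integral\<^sup>L lborel e"
  have Z_eq: "(LINT g:F|lborel. p k i g * exp (- gamma_bar F psi p n i k g)) = Z"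
    unfolding Z_def e_def a_def set_lebesgue_integral_def I_def P_def G_def
    by (simp add: mult.assoc)
  have Z_nn: "0 \<le> Z" unfolding Z_def using e_nn by simp
  have Z_pos: "0 < Z"
  proof (rule ccontr)
    assume "\<not> 0 < Z"
    then have "Z = 0" using Z_nn by simp
    then have "AE x in lborel. e x = 0" unfolding Z_def
      using integral_nonneg_eq_0_iff_AE[OF e_int] e_nn by simp
    then have "AE x in lborel. a x = 0" by eventually_elim (simp add: e_def)
    then have "integral\<^sup>L lborel a = 0" by (rule integral_eq_zero_AE)
    then show False using a_one by simp
  qed
  have cQ_pt: "\<And>x. I x * (Q x * G x) = d x / Z"
  proof -
    fix x show "I x * (Q x * G x) = d x / Z"
    proof (cases "x \<in> F")
      case True
      then have "Q x = P x * exp (- G x) / Z" using update[OF True] Z_eq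
        unfolding Q_def P_def G_def by simp
      then show ?thesis using True unfolding d_def b_def I_def by simp
    qed (simp add: d_def b_def I_def)
  qed
  have cQ: "c_bar F psi p n i k (p (Suc k) i) = integral\<^sup>L lborel d / Z"
  proof -
    have "c_bar F psi p n i k (p (Suc k) i) = integral\<^sup>L lborel (\<lambda>x. I x * (Q x * G x))"
      unfolding c_bar_def set_lebesgue_integral_def I_def Q_def G_def by simp
    also have "\<dots> = integral\<^sup>L lborel (\<lambda>x. d x / Z)" using cQ_pt by simp
    also have "\<dots> = integral\<^sup>L lborel d / Z" by simp
    finally show ?thesis .
  qed
  define h where "h = (\<lambda>x. d x - m * e x - exp (- m) * b x + m * exp (- m) * a x)"
  have h_alt: "\<And>x. h x = a x * ((G x - m) * (exp (- G x) - exp (- m)))"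
    unfolding h_def d_def e_def b_def a_def by (simp add: algebra_simps)
  have h_le: "\<And>x. h x \<le> 0"
    unfolding h_alt using a_nn exp_key_le by (simp add: mult_nonneg_nonpos)
  have h_int: "integrable lborel h" unfolding h_def
    using d_int e_int b_int a_int by auto
  have h_integral: "integral\<^sup>L lborel h = integral\<^sup>L lborel d - m * Z"
    unfolding h_def Z_def m_def using d_int e_int b_int a_int a_one
    by (simp add: m_def)
  have lt: "integral\<^sup>L lborel d < m * Z"
  proof (rule ccontr)
    assume "\<not> integral\<^sup>L lborel d < m * Z"
    moreover have "0 \<le> integral\<^sup>L lborel (\<lambda>x. - h x)"
      by (rule Bochner_Integration.integral_nonneg) (use h_le in auto)
    then have "integral\<^sup>L lborel h \<le> 0" by simp
    ultimately have "integral\<^sup>L lborel (\<lambda>x. - h x) = 0" using h_integral by simp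
    then have "AE x in lborel. - h x = 0"
      using integral_nonneg_eq_0_iff_AE[of lborel "\<lambda>x. - h x"] h_int h_le by simp
    then have AE0: "AE x in lborel. a x = 0 \<or> G x = m"
      by eventually_elim (auto simp: h_alt dest: exp_key_eq)
    then have "AE x in lborel. e x = exp (- m) * a x"
      by eventually_elim (auto simp: e_def)
    moreover have "(\<lambda>x. exp (- m) * a x) \<in> borel_measurable lborel" using a_meas by measurable
    ultimately have "integral\<^sup>L lborel e = integral\<^sup>L lborel (\<lambda>x. exp (- m) * a x)"
      using integral_cong_AE[OF e_meas] by blast
    then have Zm: "Z = exp (- m)" using a_one unfolding Z_def by simp
    have "AE x in lborel. x \<in> F \<longrightarrow> p (Suc k) i x = p k i x"
      using AE0
    proof eventually_elim
      case (elim x)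
      show ?case
      proof
        assume x: "x \<in> F"
        have "Q x = P x * exp (- G x) / Z" using update[OF x] Z_eq
          unfolding Q_def P_def G_def by simp
        moreover have "P x = 0 \<or> G x = m" using elim x by (simp add: a_def I_def)
        ultimately show "p (Suc k) i x = p k i x"
          unfolding Q_def P_def using Zm by auto
      qed
    qed
    then show False using changed by simp
  qed
  have "integral\<^sup>L lborel d / Z < m" using lt Z_pos by (simp add: divide_less_eq)
  then show ?thesis using cQ cP by (intro exI[of _ "m - integral\<^sup>L lborel d / Z"]) simp
qed

end
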